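(* Let $\gamma\colon I\to\mathbb R^3$ be a curve parametrized by arc-length whose curvature is a nonzero constant $\kappa_0$, and suppose there exist $a_0,a_1\in\mathbb R$ with $a_1>0$ such that $|\gamma(s)|^2=(s+a_0)^2+a_1^2$ for all $s\in I$. Then there exists $q\in\mathbb R$, $q\neq0$, such that $\gamma''=q\,\gamma\times\gamma'$, i.e. $\gamma$ is a conformal trajectory of the radial vector field $V(x,y,z)=x\partial_x+y\partial_y+z\partial_z$.
   Context: $\times$ denotes the usual cross product of $\mathbb R^3$ and $|\cdot|$ the Euclidean norm. For a fixed real $q\neq0$, a conformal trajectory of a conformal vector field $V$ on $\mathbb R^3$ is a regular curve with $\gamma''=q\,V(\gamma)\times\gamma'$. *)

theory Defs
  imports "HOL-Analysis.Analysis"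
begin

definition vder :: "(real \<Rightarrow> real^3) \<Rightarrow> (real \<Rightarrow> real^3)" where
  "vder f = (\<lambda>t. vector_derivative f (at t))"

definition smooth_curve_on :: "real set \<Rightarrow> (real \<Rightarrow> real^3) \<Rightarrow> bool" where
  "smooth_curve_on I \<gamma> \<longleftrightarrow> (\<forall>n. \<forall>s\<in>I. (vder ^^ n) \<gamma> differentiable (at s))"

definition arclength_param :: "real set \<Rightarrow> (real \<Rightarrow> real^3) \<Rightarrow> bool" where
  "arclength_param I \<gamma> \<longleftrightarrow> (\<forall>s\<in>I. norm (vder \<gamma> s) = 1)"

definition curvature :: "(real \<Rightarrow> real^3) \<Rightarrow> real \<Rightarrow> real" where
  "curvature \<gamma> s = norm (cross3 (vder \<gamma> s) (vder (vder \<gamma>) s)) / norm (vder \<gamma> s) ^ 3"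

end

theory Submission
  imports Defs
begin

lemma inner_vd:
  fixes f g :: "real \<Rightarrow> real^3"
  assumes "(f has_vector_derivative f') (at x)" "(g has_vector_derivative g') (at x)"
  shows "((\<lambda>x. f x \<bullet> g x) has_real_derivative (f x \<bullet> g' + f' \<bullet> g x)) (at x)"
proof -
  have "((\<lambda>x. f x \<bullet> g x) has_derivative (\<lambda>h. f x \<bullet> (h *\<^sub>R g') + (h *\<^sub>R f') \<bullet> g x)) (at x)"
    using has_derivative_inner[OF assms(1)[unfolded has_vector_derivative_def]
        assms(2)[unfolded has_vector_derivative_def]] .
  then show ?thesis
    unfolding has_field_derivative_def
    by (rule has_derivative_eq_rhs) (auto simp: algebra_simps)
qed

lemma deriv_eq_local:
  fixes f g :: "real \<Rightarrow> real"
  assumes "(f has_real_derivative a) (at x)" "(g has_real_derivative b) (at x)"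
    "open I" "x \<in> I" "\<And>z. z \<in> I \<Longrightarrow> f z = g z"
  shows "a = b"
proof -
  have "(g has_real_derivative a) (at x)"
    using has_field_derivative_transform_within_open[OF assms(1) assms(3,4)] assms(5) by auto
  then show ?thesis using assms(2) DERIV_unique by blast
qed

lemma cross_cross_l: "cross3 (cross3 a b) c = (a \<bullet> c) *\<^sub>R b - (b \<bullet> c) *\<^sub>R a"
  by (simp add: cross3_simps forall_3)

lemma cross_cross_r: "cross3 w (cross3 w v) = (w \<bullet> v) *\<^sub>R w - (w \<bullet> w) *\<^sub>R v"
  by (simp add: cross3_simps forall_3)

lemma perp_decomp:
  fixes a b v :: "real^3"
  assumes "v \<bullet> a = 0" "v \<bullet> b = 0"
  shows "(v \<bullet> cross3 a b) *\<^sub>R cross3 a b = (norm (cross3 a b))^2 *\<^sub>R v"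
proof -
  have "cross3 (cross3 a b) v = 0" using assms by (simp add: cross_cross_l inner_commute)
  then have "cross3 (cross3 a b) (cross3 (cross3 a b) v) = 0" by simp
  then show ?thesis by (simp add: cross_cross_r power2_norm_eq_inner inner_commute)
qed

theorem mainTheorem5:
  fixes \<gamma> :: "real \<Rightarrow> real^3" and I :: "real set" and \<kappa>0 a0 a1 :: real
  assumes "is_interval I" and "open I" and "I \<noteq> {}"
    and "smooth_curve_on I \<gamma>"
    and "arclength_param I \<gamma>"
    and "\<kappa>0 \<noteq> 0" and "\<forall>s\<in>I. curvature \<gamma> s = \<kappa>0"
    and "a1 > 0" and "\<forall>s\<in>I. norm (\<gamma> s) ^ 2 = (s + a0) ^ 2 + a1 ^ 2"
  shows "\<exists>q::real. q \<noteq> 0 \<and>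
           (\<forall>s\<in>I. vder (vder \<gamma>) s = q *\<^sub>R cross3 (\<gamma> s) (vder \<gamma> s))"
proof -
  define T where "T = vder \<gamma>"
  define T2 where "T2 = vder T"
  have d0: "\<gamma> differentiable (at s)" if "s \<in> I" for s
    using assms(4) that unfolding smooth_curve_on_def by (metis funpow_0)
  have d1: "T differentiable (at s)" if "s \<in> I" for s
    using assms(4) that unfolding smooth_curve_on_def T_def
    by (metis funpow_0 funpow_Suc_right o_apply)
  have d2: "T2 differentiable (at s)" if "s \<in> I" for s
    using assms(4) that unfolding smooth_curve_on_def T2_def T_def
    by (metis One_nat_def Suc_1 funpow_0 funpow_Suc_right o_apply)
  have v0: "(\<gamma> has_vector_derivative T s) (at s)" if "s \<in> I" for s
    using vector_derivative_works d0[OF that] unfolding T_def vder_def by blast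
  have v1: "(T has_vector_derivative T2 s) (at s)" if "s \<in> I" for s
    using vector_derivative_works d1[OF that] unfolding T2_def vder_def by blast
  have unit: "T s \<bullet> T s = 1" if "s \<in> I" for s
    using assms(5) that unfolding arclength_param_def T_def
    by (metis norm_eq_1)
  have gT: "\<gamma> s \<bullet> T s = s + a0" if s: "s \<in> I" for s
  proof -
    have "2 * (\<gamma> s \<bullet> T s) = 2 * (s + a0)"
    proof (rule deriv_eq_local[OF _ _ assms(2) s])
      show "((\<lambda>x. \<gamma> x \<bullet> \<gamma> x) has_real_derivative 2 * (\<gamma> s \<bullet> T s)) (at s)"
        using inner_vd[OF v0[OF s] v0[OF s]] by (simp add: inner_commute)
      show "((\<lambda>x. (x + a0)^2 + a1^2) has_real_derivative 2 * (s + a0)) (at s)"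
        by (auto intro!: derivative_eq_intros)
      show "\<gamma> z \<bullet> \<gamma> z = (z + a0)^2 + a1^2" if "z \<in> I" for z
        using assms(9) that by (simp add: power2_norm_eq_inner)
    qed
    then show ?thesis by simp
  qed
  have TT2: "T s \<bullet> T2 s = 0" if s: "s \<in> I" for s
  proof -
    have "2 * (T s \<bullet> T2 s) = 0"
    proof (rule deriv_eq_local[OF _ _ assms(2) s])
      show "((\<lambda>x. T x \<bullet> T x) has_real_derivative 2 * (T s \<bullet> T2 s)) (at s)"
        using inner_vd[OF v1[OF s] v1[OF s]] by (simp add: inner_commute)
      show "((\<lambda>x. 1) has_real_derivative 0) (at s)" by simp
      show "T z \<bullet> T z = 1" if "z \<in> I" for z using unit that by simp
    qed
    then show ?thesis by simp
  qed
  have gT2: "\<gamma> s \<bullet> T2 s = 0" if s: "s \<in> I" for s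
  proof -
    have "\<gamma> s \<bullet> T2 s + T s \<bullet> T s = 1"
    proof (rule deriv_eq_local[OF _ _ assms(2) s])
      show "((\<lambda>x. \<gamma> x \<bullet> T x) has_real_derivative \<gamma> s \<bullet> T2 s + T s \<bullet> T s) (at s)"
        using inner_vd[OF v0[OF s] v1[OF s]] by simp
      show "((\<lambda>x. x + a0) has_real_derivative 1) (at s)"
        by (auto intro!: derivative_eq_intros)
      show "\<gamma> z \<bullet> T z = z + a0" if "z \<in> I" for z using gT that by simp
    qed
    then show ?thesis using unit[OF s] by simp
  qed
  have nT: "norm (T s) = 1" if "s \<in> I" for s
    using assms(5) that unfolding arclength_param_def T_def by simp
  have nT2: "norm (T2 s) = \<kappa>0" if s: "s \<in> I" for s
  proof -
    have "norm (cross3 (T s) (T2 s)) = \<kappa>0"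
      using assms(7)[rule_format, OF s] nT[OF s] unfolding curvature_def T2_def T_def by simp
    moreover have "(norm (cross3 (T s) (T2 s)))\<^sup>2 = (norm (T2 s))\<^sup>2"
      using norm_cross_dot[of "T s" "T2 s"] TT2[OF s] nT[OF s] by simp
    ultimately show ?thesis
      by (metis norm_ge_zero power2_eq_iff_nonneg)
  qed
  have k0: "\<kappa>0 > 0"
    using assms(3,6) nT2 by (metis ex_in_conv norm_ge_zero order_le_neq_trans)
  have nw: "(norm (cross3 (\<gamma> s) (T s)))\<^sup>2 = a1\<^sup>2" if s: "s \<in> I" for s
    using norm_cross_dot[of "\<gamma> s" "T s"] gT[OF s] nT[OF s] assms(9) s
    by (simp add: power_mult_distrib)
  define c where "c s = (T2 s \<bullet> cross3 (\<gamma> s) (T s)) / a1\<^sup>2" for s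
  have dec: "T2 s = c s *\<^sub>R cross3 (\<gamma> s) (T s)" if s: "s \<in> I" for s
  proof -
    have "(T2 s \<bullet> cross3 (\<gamma> s) (T s)) *\<^sub>R cross3 (\<gamma> s) (T s) = a1\<^sup>2 *\<^sub>R T2 s"
      using perp_decomp[of "T2 s" "\<gamma> s" "T s"] gT2[OF s] TT2[OF s] nw[OF s]
      by (simp add: inner_commute)
    then show ?thesis
      proof -
      assume h: "(T2 s \<bullet> cross3 (\<gamma> s) (T s)) *\<^sub>R cross3 (\<gamma> s) (T s) = a1\<^sup>2 *\<^sub>R T2 s"
      have "a1\<^sup>2 \<noteq> 0" using assms(8) by simp
      have "(1 / a1\<^sup>2) *\<^sub>R ((T2 s \<bullet> cross3 (\<gamma> s) (T s)) *\<^sub>R cross3 (\<gamma> s) (T s)) = T2 s"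
        using h \<open>a1\<^sup>2 \<noteq> 0\<close> by simp
      then show ?thesis by (simp add: c_def)
    qed
  qed
  have cabs: "\<bar>c s\<bar> = \<kappa>0 / a1" if s: "s \<in> I" for s
  proof -
    have "\<kappa>0 = \<bar>c s\<bar> * norm (cross3 (\<gamma> s) (T s))"
      using nT2[OF s] dec[OF s] by (metis norm_scaleR)
    also have "norm (cross3 (\<gamma> s) (T s)) = a1"
      using nw[OF s] assms(8) by (metis norm_ge_zero power2_eq_iff_nonneg less_imp_le)
    finally show ?thesis using assms(8) by simp
  qed
  have cont: "continuous_on I c"
  proof -
    have "continuous_on I \<gamma>" "continuous_on I T" "continuous_on I T2"
      using d0 d1 d2 by (auto intro!: continuous_at_imp_continuous_on differentiable_imp_continuous_within)
    then show ?thesis unfolding c_def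
      using assms(8) by (auto intro!: continuous_intros continuous_on_cross)
  qed
  obtain s0 where s0: "s0 \<in> I" using assms(3) by blast
  have const: "c s = c s0" if s: "s \<in> I" for s
  proof (rule ccontr)
    assume ne: "c s \<noteq> c s0"
    have conn: "is_interval (c ` I)"
      using connected_continuous_image[OF cont] assms(1) is_interval_connected_1 by blast
    have pos: "\<kappa>0 / a1 > 0" using k0 assms(8) by simp
    have "c s = - c s0" using cabs[OF s] cabs[OF s0] ne by (auto simp: abs_if split: if_splits)
    then have "min (c s) (c s0) \<le> 0" "0 \<le> max (c s) (c s0)" by auto
    then have "0 \<in> c ` I"
      using conn s s0 unfolding is_interval_1
      by (metis imageI max_def min_def)
    then obtain x where "x \<in> I" "c x = 0" by auto
    then show False using cabs[of x] pos by force
  qed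
  show ?thesis
  proof (intro exI conjI ballI)
    show "c s0 \<noteq> 0" using cabs[OF s0] k0 assms(8) by auto
    fix s assume s: "s \<in> I"
    show "vder (vder \<gamma>) s = c s0 *\<^sub>R cross3 (\<gamma> s) (vder \<gamma> s)"
      using dec[OF s] const[OF s] unfolding T2_def T_def by simp
  qed
qed

end
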